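(* Let $I$ be a BI instance with matroid intersection constraint $(\mathcal I_1,\mathcal I_2)$, $0<\varepsilon<\tfrac12$, $\tfrac{\mathrm{OPT}(I)}{2}\le\alpha\le\mathrm{OPT}(I)$, and $r\in[\log_{1-\varepsilon}(\varepsilon/2)+1]$. Let $U\subseteq\mathcal K_r(\alpha)$, $\Delta\in\mathcal M_{\le q(\varepsilon)}$, and let $B$ be a minimum basis of $[(E,\mathcal I_2)\cap U]_{\le q(\varepsilon)}$ with respect to $c$. Let $a\in(U\cap\Delta)\setminus B$. Then there is $b\in B\setminus\Delta$ such that $b$ is a shift to $a$ for $\Delta$ or $b$ is a semi-shift to $a$ for $\Delta$.
   Context: A BI instance is $I=(E,\mathcal C,c,p,\beta)$ where $\mathcal C=(\mathcal I_1,\mathcal I_2)$ with $(E,\mathcal I_1),(E,\mathcal I_2)$ matroids, $c,p:E\to\mathbb R_{\ge0}$, $\beta\ge0$; $\mathcal M=\mathcal I_1\cap\mathcal I_2$; a solution is $S\in\mathcal M$ with $c(S)\le\beta$, and $\mathrm{OPT}(I)$ is the maximum of $p(S)=\sum_{e\in S}p(e)$ over solutions. $q(\varepsilon)=\lceil\varepsilon^{-1/\varepsilon}\rceil$; $\mathcal M_{\le q(\varepsilon)}=\{A\in\mathcal M:|A|\le q(\varepsilon)\}$; $[k]=\{1,\dots,\lfloor k\rfloor\}$; $A+e=A\cup\{e\}$, $A-e=A\setminus\{e\}$. Profit class: $\mathcal K_r(\alpha)=\{e\in E: \tfrac{p(e)}{2\alpha}\in((1-\varepsilon)^r,(1-\varepsilon)^{r-1}]\}$.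 $[(E,\mathcal I_2)\cap U]_{\le q}$ is the matroid with ground set $U$ and independent sets $\{A\in\mathcal I_2: A\subseteq U, |A|\le q\}$; a minimum basis w.r.t. $c$ is a basis of minimum total cost. For $\Delta\in\mathcal M_{\le q(\varepsilon)}$, $a\in\Delta\cap\mathcal K_r(\alpha)$ and $b\in\mathcal K_r(\alpha)\setminus\Delta$: $b$ is a shift to $a$ for $\Delta$ if $c(b)\le c(a)$ and $\Delta-a+b\in\mathcal M_{\le q(\varepsilon)}$; $b$ is a semi-shift to $a$ for $\Delta$ if $c(b)\le c(a)$, $\Delta-a+b\in\mathcal I_2$ and $\Delta-a+b\notin\mathcal I_1$. *)

theory Defs
  imports Complex_Main
begin

definition matroid :: "'a set \<Rightarrow> 'a set set \<Rightarrow> bool" where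
  "matroid E \<I> \<longleftrightarrow> finite E \<and> (\<forall>A\<in>\<I>. A \<subseteq> E) \<and> {} \<in> \<I> \<and>
     (\<forall>A B. A \<in> \<I> \<longrightarrow> B \<subseteq> A \<longrightarrow> B \<in> \<I>) \<and>
     (\<forall>A B. A \<in> \<I> \<longrightarrow> B \<in> \<I> \<longrightarrow> card A < card B \<longrightarrow> (\<exists>e\<in>B - A. insert e A \<in> \<I>))"

definition BI_instance :: "'a set \<Rightarrow> 'a set set \<Rightarrow> 'a set set \<Rightarrow> ('a \<Rightarrow> real) \<Rightarrow> ('a \<Rightarrow> real) \<Rightarrow> real \<Rightarrow> bool" where
  "BI_instance E \<I>1 \<I>2 c p \<beta> \<longleftrightarrow> matroid E \<I>1 \<and> matroid E \<I>2 \<and>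
     (\<forall>e\<in>E. c e \<ge> 0) \<and> (\<forall>e\<in>E. p e \<ge> 0) \<and> \<beta> \<ge> 0"

definition BI_solution :: "'a set set \<Rightarrow> 'a set set \<Rightarrow> ('a \<Rightarrow> real) \<Rightarrow> real \<Rightarrow> 'a set \<Rightarrow> bool" where
  "BI_solution \<I>1 \<I>2 c \<beta> S \<longleftrightarrow> S \<in> \<I>1 \<inter> \<I>2 \<and> sum c S \<le> \<beta>"

definition BI_OPT :: "'a set set \<Rightarrow> 'a set set \<Rightarrow> ('a \<Rightarrow> real) \<Rightarrow> ('a \<Rightarrow> real) \<Rightarrow> real \<Rightarrow> real" where
  "BI_OPT \<I>1 \<I>2 c p \<beta> = Max (sum p ` {S. BI_solution \<I>1 \<I>2 c \<beta> S})"

definition q_eps :: "real \<Rightarrow> nat" where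
  "q_eps \<epsilon> = nat \<lceil>\<epsilon> powr (- 1 / \<epsilon>)\<rceil>"

definition M_le :: "'a set set \<Rightarrow> 'a set set \<Rightarrow> nat \<Rightarrow> 'a set set" where
  "M_le \<I>1 \<I>2 q = {A \<in> \<I>1 \<inter> \<I>2. card A \<le> q}"

definition profit_class :: "'a set \<Rightarrow> ('a \<Rightarrow> real) \<Rightarrow> real \<Rightarrow> real \<Rightarrow> nat \<Rightarrow> 'a set" where
  "profit_class E p \<epsilon> \<alpha> r =
     {e \<in> E. p e / (2 * \<alpha>) \<in> {(1 - \<epsilon>) ^ r <.. (1 - \<epsilon>) ^ (r - 1)}}"

text \<open>Independent sets of the matroid [(E,I2) \<inter> U]_{<= q}.\<close>
definition restr_trunc :: "'a set set \<Rightarrow> 'a set \<Rightarrow> nat \<Rightarrow> 'a set set" where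
  "restr_trunc \<I>2 U q = {A \<in> \<I>2. A \<subseteq> U \<and> card A \<le> q}"

definition is_basis :: "'a set set \<Rightarrow> 'a set \<Rightarrow> bool" where
  "is_basis \<F> X \<longleftrightarrow> X \<in> \<F> \<and> (\<forall>Y\<in>\<F>. X \<subseteq> Y \<longrightarrow> Y = X)"

definition is_min_basis :: "'a set set \<Rightarrow> ('a \<Rightarrow> real) \<Rightarrow> 'a set \<Rightarrow> bool" where
  "is_min_basis \<F> c X \<longleftrightarrow> is_basis \<F> X \<and> (\<forall>Y. is_basis \<F> Y \<longrightarrow> sum c X \<le> sum c Y)"

definition is_shift :: "'a set set \<Rightarrow> 'a set set \<Rightarrow> ('a \<Rightarrow> real) \<Rightarrow> nat \<Rightarrow> 'a set \<Rightarrow> 'a set \<Rightarrow> 'a \<Rightarrow> 'a \<Rightarrow> bool" where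
  "is_shift \<I>1 \<I>2 c q K \<Delta> a b \<longleftrightarrow>
     \<Delta> \<in> M_le \<I>1 \<I>2 q \<and> a \<in> \<Delta> \<inter> K \<and> b \<in> K - \<Delta> \<and>
     c b \<le> c a \<and> insert b (\<Delta> - {a}) \<in> M_le \<I>1 \<I>2 q"

definition is_semi_shift :: "'a set set \<Rightarrow> 'a set set \<Rightarrow> ('a \<Rightarrow> real) \<Rightarrow> nat \<Rightarrow> 'a set \<Rightarrow> 'a set \<Rightarrow> 'a \<Rightarrow> 'a \<Rightarrow> bool" where
  "is_semi_shift \<I>1 \<I>2 c q K \<Delta> a b \<longleftrightarrow>
     \<Delta> \<in> M_le \<I>1 \<I>2 q \<and> a \<in> \<Delta> \<inter> K \<and> b \<in> K - \<Delta> \<and>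
     c b \<le> c a \<and> insert b (\<Delta> - {a}) \<in> \<I>2 \<and> insert b (\<Delta> - {a}) \<notin> \<I>1"

end

theory Submission
  imports Defs
begin

lemma aug_ext:
  assumes aug: "\<forall>A B. A\<in>F \<longrightarrow> B\<in>F \<longrightarrow> card A < card B \<longrightarrow> (\<exists>e\<in>B-A. insert e A \<in> F)"
    and fin: "\<forall>A\<in>F. finite A"
  shows "A\<in>F \<Longrightarrow> B\<in>F \<Longrightarrow> card A \<le> card B \<Longrightarrow> \<exists>Z\<in>F. A \<subseteq> Z \<and> Z \<subseteq> A \<union> B \<and> card Z = card B"
proof (induction "card B - card A" arbitrary: A)
  case 0
  then show ?case by (intro bexI[of _ A]) auto
next
  case (Suc n)
  then have "card A < card B" by simp
  then obtain e where e: "e \<in> B - A" "insert e A \<in> F" using aug Suc.prems by blast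
  have fA: "finite A" using fin Suc.prems by blast
  have ca: "card (insert e A) = Suc (card A)" using e fA by simp
  have "n = card B - card (insert e A)" using ca Suc.hyps by simp
  moreover have "card (insert e A) \<le> card B" using ca \<open>card A < card B\<close> by simp
  ultimately obtain Z where "Z\<in>F" "insert e A \<subseteq> Z" "Z \<subseteq> insert e A \<union> B" "card Z = card B"
    using Suc.hyps(1)[of "insert e A"] e Suc.prems by blast
  then show ?case using e by (intro bexI[of _ Z]) auto
qed

lemma matroid_aug:
  assumes "matroid E I"
  shows "\<forall>A B. A\<in>I \<longrightarrow> B\<in>I \<longrightarrow> card A < card B \<longrightarrow> (\<exists>e\<in>B-A. insert e A \<in> I)"
    and "\<forall>A\<in>I. finite A" and "\<And>A B. A \<in> I \<Longrightarrow> B \<subseteq> A \<Longrightarrow> B \<in> I"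
  using assms unfolding matroid_def by (auto intro: finite_subset)

lemma rt_aug:
  assumes "matroid E I"
  shows "\<forall>A B. A\<in>restr_trunc I U q \<longrightarrow> B\<in>restr_trunc I U q \<longrightarrow> card A < card B \<longrightarrow> (\<exists>e\<in>B-A. insert e A \<in> restr_trunc I U q)"
    and "\<forall>A\<in>restr_trunc I U q. finite A"
proof -
  note m = matroid_aug[OF assms]
  show "\<forall>A B. A\<in>restr_trunc I U q \<longrightarrow> B\<in>restr_trunc I U q \<longrightarrow> card A < card B \<longrightarrow> (\<exists>e\<in>B-A. insert e A \<in> restr_trunc I U q)"
  proof (intro allI impI)
    fix A B assume A: "A\<in>restr_trunc I U q" and B: "B\<in>restr_trunc I U q" and c: "card A < card B"
    then obtain e where e: "e\<in>B-A" "insert e A \<in> I" using m(1) unfolding restr_trunc_def by blast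
    have "finite A" using A m(2) unfolding restr_trunc_def by blast
    then have "card (insert e A) \<le> q" using e c B unfolding restr_trunc_def by simp
    then show "\<exists>e\<in>B-A. insert e A \<in> restr_trunc I U q"
      using e A B unfolding restr_trunc_def by blast
  qed
  show "\<forall>A\<in>restr_trunc I U q. finite A" using m(2) unfolding restr_trunc_def by blast
qed

theorem mainTheorem12:
  fixes E :: "'a set" and \<I>1 \<I>2 :: "'a set set" and c p :: "'a \<Rightarrow> real"
    and \<beta> \<epsilon> \<alpha> :: real and r :: nat and U \<Delta> B :: "'a set" and a :: 'a
  assumes inst: "BI_instance E \<I>1 \<I>2 c p \<beta>"
    and eps: "0 < \<epsilon>" "\<epsilon> < 1 / 2"
    and alpha: "BI_OPT \<I>1 \<I>2 c p \<beta> / 2 \<le> \<alpha>" "\<alpha> \<le> BI_OPT \<I>1 \<I>2 c p \<beta>"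
    and r: "1 \<le> r" "real r \<le> log (1 - \<epsilon>) (\<epsilon> / 2) + 1"
    and U: "U \<subseteq> profit_class E p \<epsilon> \<alpha> r"
    and Delta: "\<Delta> \<in> M_le \<I>1 \<I>2 (q_eps \<epsilon>)"
    and B: "is_min_basis (restr_trunc \<I>2 U (q_eps \<epsilon>)) c B"
    and a: "a \<in> (U \<inter> \<Delta>) - B"
  shows "\<exists>b \<in> B - \<Delta>.
           is_shift \<I>1 \<I>2 c (q_eps \<epsilon>) (profit_class E p \<epsilon> \<alpha> r) \<Delta> a b \<or>
           is_semi_shift \<I>1 \<I>2 c (q_eps \<epsilon>) (profit_class E p \<epsilon> \<alpha> r) \<Delta> a b"
proof -
  define q where "q = q_eps \<epsilon>"
  define K where "K = profit_class E p \<epsilon> \<alpha> r"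
  define F where "F = restr_trunc \<I>2 U q"
  define D where "D = \<Delta> - {a}"
  have m2: "matroid E \<I>2" using inst unfolding BI_instance_def by blast
  note m = matroid_aug[OF m2]
  note rt = rt_aug[OF m2, of U q, folded F_def]
  have DI: "\<Delta> \<in> \<I>2" "\<Delta> \<in> \<I>1" "card \<Delta> \<le> q" using Delta unfolding M_le_def q_def by auto
  have fD: "finite \<Delta>" using DI m(2) by blast
  have BF: "B \<in> F" and Bmax: "\<And>Y. Y \<in> F \<Longrightarrow> B \<subseteq> Y \<Longrightarrow> Y = B"
    and Bmin: "\<And>Y. is_basis F Y \<Longrightarrow> sum c B \<le> sum c Y"
    using B unfolding is_min_basis_def is_basis_def F_def q_def by auto
  have BI: "B \<in> \<I>2" "B \<subseteq> U" "card B \<le> q" using BF unfolding F_def restr_trunc_def by auto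
  have fB: "finite B" using BI m(2) by blast
  have key: "\<exists>b \<in> B - \<Delta>. c b \<le> c a \<and> insert b D \<in> \<I>2"
  proof (rule ccontr)
    assume neg: "\<not> ?thesis"
    define L where "L = {b \<in> B. c b \<le> c a}"
    have LB: "L \<subseteq> B" unfolding L_def by auto
    have LI: "L \<in> \<I>2" using m(3)[OF BI(1) LB] .
    have fL: "finite L" using LB fB finite_subset by blast
    have DI2: "D \<in> \<I>2" using m(3)[OF DI(1)] unfolding D_def by blast
    have c0: "card \<Delta> > 0" using a fD by (auto simp: card_gt_0_iff)
    have cD0: "card D = card \<Delta> - 1" using a fD unfolding D_def by (simp add: card_Diff_singleton)
    have cD: "card D < card \<Delta>" "card \<Delta> = Suc (card D)" using cD0 c0 by simp_all
    have R: "\<And>b. b \<in> L - D \<Longrightarrow> insert b D \<notin> \<I>2"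
      using neg a unfolding L_def D_def by auto
    have rank: "\<And>X. X \<in> \<I>2 \<Longrightarrow> X \<subseteq> D \<union> L \<Longrightarrow> card X \<le> card D"
    proof (rule ccontr)
      fix X assume X: "X \<in> \<I>2" "X \<subseteq> D \<union> L" "\<not> card X \<le> card D"
      then obtain e where "e \<in> X - D" "insert e D \<in> \<I>2" using m(1) DI2 by (meson not_le)
      then show False using R X by blast
    qed
    have cL: "card L \<le> card D" using rank[OF LI] by blast
    obtain Z where Z: "Z \<in> \<I>2" "L \<subseteq> Z" "Z \<subseteq> L \<union> \<Delta>" "card Z = card \<Delta>"
      using aug_ext[OF m(1) m(2) LI DI(1)] cL cD by auto
    have "a \<in> Z"
    proof (rule ccontr)
      assume "a \<notin> Z"
      then have "Z \<subseteq> D \<union> L" using Z unfolding D_def by auto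
      then show False using rank[OF Z(1)] Z cD by simp
    qed
    then have aLI: "insert a L \<in> \<I>2" using m(3)[OF Z(1)] Z by blast
    have aL: "a \<notin> L" using a LB by auto
    have caL: "card (insert a L) = Suc (card L)" using aL fL by simp
    have aLF: "insert a L \<in> F" unfolding F_def restr_trunc_def
      using aLI a LB BI caL cL cD DI by auto
    show False
    proof (cases "L = B")
      case True
      then have "insert a B = B" using Bmax[OF aLF] by auto
      then show ?thesis using a by auto
    next
      case False
      then have "L \<subset> B" using LB by blast
      then have "card L < card B" using fB by (simp add: psubset_card_mono)
      then have cle: "card (insert a L) \<le> card B" using caL by simp
      then obtain Z' where Z': "Z' \<in> F" "insert a L \<subseteq> Z'" "Z' \<subseteq> insert a L \<union> B"
        "card Z' = card B"
        using aug_ext[OF rt(1) rt(2) aLF BF cle] by blast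
      have Z'sub: "Z' - {a} \<subseteq> B" using Z' LB by auto
      have fZ': "finite Z'" using Z' rt(2) by blast
      have cZa: "card (Z' - {a}) = card B - 1" using Z' by (simp add: card_Diff_singleton)
      have Bpos: "card B > 0" using \<open>card L < card B\<close> by simp
      have "card (B - (Z' - {a})) = 1"
        using card_Diff_subset[OF finite_subset[OF Z'sub fB] Z'sub] cZa Bpos by simp
      then obtain x where x: "B - (Z' - {a}) = {x}" by (meson card_1_singletonE)
      have xB: "x \<in> B" and xZ: "x \<notin> Z'" using x a by auto
      have xL: "x \<notin> L" using xZ Z' by auto
      have cx: "c x > c a" using xL xB unfolding L_def by auto
      have Zeq: "Z' = insert a (B - {x})"
      proof
        show "Z' \<subseteq> insert a (B - {x})" using Z'sub xZ by auto
        show "insert a (B - {x}) \<subseteq> Z'" using x \<open>a \<in> Z\<close> Z' by auto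
      qed
      have "sum c Z' = c a + (sum c B - c x)"
      proof -
        have "sum c Z' = c a + sum c (B - {x})" using Zeq a fB by (simp add: sum.insert)
        moreover have "sum c B = c x + sum c (B - {x})" using sum.remove[OF fB xB] .
        ultimately show ?thesis by simp
      qed
      then have less: "sum c Z' < sum c B" using cx by simp
      have "is_basis F Z'"
        unfolding is_basis_def
      proof (intro conjI ballI impI)
        show "Z' \<in> F" by fact
        fix Y assume Y: "Y \<in> F" "Z' \<subseteq> Y"
        show "Y = Z'"
        proof (rule ccontr)
          assume "Y \<noteq> Z'"
          have fY: "finite Y" using Y rt(2) by blast
          have "Z' \<subset> Y" using Y \<open>Y \<noteq> Z'\<close> by blast
          then have "card Z' < card Y" using fY by (simp add: psubset_card_mono)
          then have "card B < card Y" using Z'(4) by simp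
          then obtain e where "e \<in> Y - B" "insert e B \<in> F" using rt(1) BF Y(1) by blast
          then show False using Bmax by blast
        qed
      qed
      then show False using Bmin[of Z'] less by simp
    qed
  qed
  then obtain b where b: "b \<in> B - \<Delta>" "c b \<le> c a" "insert b D \<in> \<I>2" by blast
  have aK: "a \<in> \<Delta> \<inter> K" and bK: "b \<in> K - \<Delta>" using a b BI U unfolding K_def by auto
  have c0: "card \<Delta> > 0" using a fD by (auto simp: card_gt_0_iff)
  have fDD: "finite D" using fD unfolding D_def by simp
  have bD: "b \<notin> D" using b(1) unfolding D_def by simp
  have cDD: "card D = card \<Delta> - 1" using a fD unfolding D_def by (simp add: card_Diff_singleton)
  have cbD: "card (insert b D) = card \<Delta>" using card_insert_disjoint[OF fDD bD] cDD c0 by simp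
  show ?thesis
  proof (cases "insert b D \<in> \<I>1")
    case True
    then have "is_shift \<I>1 \<I>2 c q K \<Delta> a b"
    proof -
      have "insert b D \<in> M_le \<I>1 \<I>2 q" unfolding M_le_def using True b(3) cbD DI(3) by simp
      moreover have "\<Delta> \<in> M_le \<I>1 \<I>2 q" using Delta q_def by simp
      ultimately show ?thesis unfolding is_shift_def D_def using aK bK b(2) by blast
    qed
    then show ?thesis using b(1) unfolding q_def K_def by blast
  next
    case False
    then have "is_semi_shift \<I>1 \<I>2 c q K \<Delta> a b"
      unfolding is_semi_shift_def using Delta aK bK b(2,3) False unfolding q_def D_def by blast
    then show ?thesis using b(1) unfolding q_def K_def by blast
  qed
qed

end
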